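(* Let $M^2$ be a minimal surface in $\mathbb R^4$ and let $\{x,y,n_1,n_2\}$ be a positively oriented orthonormal frame field with $x,y$ tangent and $n_1,n_2$ normal to $M^2$. Then the invariant $\varkappa$ equals the curvature of the normal connection of $M^2$: $$\varkappa=g\big(R^\perp(x,y)n_2,\,n_1\big),$$ where $D$ is the normal connection of $M^2$ and $R^\perp(x,y)=D_xD_y-D_yD_x-D_{[x,y]}$.
   Context: $\mathbb R^4$ carries the standard metric $g=\langle\cdot,\cdot\rangle$ and flat connection $\nabla'$; everything is smooth and local. A regular surface is $M^2: z=z(u,v)$, $(u,v)\in\mathcal D\subset\mathbb R^2$, with $E=\langle z_u,z_u\rangle$, $F=\langle z_u,z_v\rangle$, $G=\langle z_v,z_v\rangle$, $W=\sqrt{EG-F^2}$, and second fundamental form $\sigma$ (normal part of $\nabla'$). Minimal means the mean curvature vector $H=\tfrac12(\sigma(x,x)+\sigma(y,y))$ ($x,y$ an orthonormal tangent basis) vanishes. For an orthonormal normal frame $\{e_1,e_2\}$ such that $(z_u,z_v,e_1,e_2)$ is positively oriented, write $\sigma(z_u,z_u)=c_{11}^1e_1+c_{11}^2e_2$, $\sigma(z_u,z_v)=c_{12}^1e_1+c_{12}^2e_2$, $\sigma(z_v,z_v)=c_{22}^1e_1+c_{22}^2e_2$, and set $\Delta_1=c_{11}^1c_{12}^2-c_{12}^1c_{11}^2$, $\Delta_2=c_{11}^1c_{22}^2-c_{22}^1c_{11}^2$, $\Delta_3=c_{12}^1c_{22}^2-c_{22}^1c_{12}^2$, $L=2\Delta_1/W$,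 $M=\Delta_2/W$, $N=2\Delta_3/W$. The invariants of $M^2$ are $k=\frac{LN-M^2}{EG-F^2}$ and $\varkappa=\frac{EN+GL-2FM}{2(EG-F^2)}$. The normal connection is $D_XV=(\nabla'_XV)^\perp$ for normal fields $V$. *)

theory Defs
  imports "HOL-Analysis.Analysis"
begin

type_synonym R4 = "real^4"

definition pu :: "(real \<times> real \<Rightarrow> 'a::real_normed_vector) \<Rightarrow> real \<times> real \<Rightarrow> 'a" where
  "pu f = (\<lambda>q. frechet_derivative f (at q) (1, 0))"
definition pv :: "(real \<times> real \<Rightarrow> 'a::real_normed_vector) \<Rightarrow> real \<times> real \<Rightarrow> 'a" where
  "pv f = (\<lambda>q. frechet_derivative f (at q) (0, 1))"

fun iter_partial :: "bool list \<Rightarrow> (real \<times> real \<Rightarrow> 'a::real_normed_vector) \<Rightarrow> real \<times> real \<Rightarrow> 'a" where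
  "iter_partial [] f = f"
| "iter_partial (b # bs) f = (if b then pu else pv) (iter_partial bs f)"

definition smooth_on :: "(real \<times> real) set \<Rightarrow> (real \<times> real \<Rightarrow> 'a::real_normed_vector) \<Rightarrow> bool" where
  "smooth_on D f \<longleftrightarrow> (\<forall>bs. \<forall>q\<in>D. iter_partial bs f differentiable (at q))"

definition EE :: "(real \<times> real \<Rightarrow> R4) \<Rightarrow> real \<times> real \<Rightarrow> real" where
  "EE z q = pu z q \<bullet> pu z q"
definition FF :: "(real \<times> real \<Rightarrow> R4) \<Rightarrow> real \<times> real \<Rightarrow> real" where
  "FF z q = pu z q \<bullet> pv z q"
definition GG :: "(real \<times> real \<Rightarrow> R4) \<Rightarrow> real \<times> real \<Rightarrow> real" where
  "GG z q = pv z q \<bullet> pv z q"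
definition WW :: "(real \<times> real \<Rightarrow> R4) \<Rightarrow> real \<times> real \<Rightarrow> real" where
  "WW z q = sqrt (EE z q * GG z q - (FF z q)^2)"

definition regular_surface :: "(real \<times> real) set \<Rightarrow> (real \<times> real \<Rightarrow> R4) \<Rightarrow> bool" where
  "regular_surface D z \<longleftrightarrow> open D \<and> smooth_on D z \<and>
     (\<forall>q\<in>D. EE z q * GG z q - (FF z q)^2 > 0)"

definition normal_part :: "(real \<times> real \<Rightarrow> R4) \<Rightarrow> real \<times> real \<Rightarrow> R4 \<Rightarrow> R4" where
  "normal_part z q w = (THE n. n \<bullet> pu z q = 0 \<and> n \<bullet> pv z q = 0 \<and> w - n \<in> span {pu z q, pv z q})"

text \<open>Second fundamental form on coordinate vectors: sigma(z_u,z_u), sigma(z_u,z_v), sigma(z_v,z_v).\<close>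
definition sigma11 :: "(real \<times> real \<Rightarrow> R4) \<Rightarrow> real \<times> real \<Rightarrow> R4" where
  "sigma11 z q = normal_part z q (pu (pu z) q)"
definition sigma12 :: "(real \<times> real \<Rightarrow> R4) \<Rightarrow> real \<times> real \<Rightarrow> R4" where
  "sigma12 z q = normal_part z q (pu (pv z) q)"
definition sigma22 :: "(real \<times> real \<Rightarrow> R4) \<Rightarrow> real \<times> real \<Rightarrow> R4" where
  "sigma22 z q = normal_part z q (pv (pv z) q)"

text \<open>sigma(a z_u + b z_v, c z_u + d z_v), by bilinearity.\<close>
definition sigma :: "(real \<times> real \<Rightarrow> R4) \<Rightarrow> real \<times> real \<Rightarrow> real \<times> real \<Rightarrow> real \<times> real \<Rightarrow> R4" where
  "sigma z q ab cd = (fst ab * fst cd) *\<^sub>R sigma11 z q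
      + (fst ab * snd cd + snd ab * fst cd) *\<^sub>R sigma12 z q
      + (snd ab * snd cd) *\<^sub>R sigma22 z q"

definition tvec :: "(real \<times> real \<Rightarrow> R4) \<Rightarrow> real \<times> real \<Rightarrow> real \<times> real \<Rightarrow> R4" where
  "tvec z q ab = fst ab *\<^sub>R pu z q + snd ab *\<^sub>R pv z q"

definition minimal_surface :: "(real \<times> real) set \<Rightarrow> (real \<times> real \<Rightarrow> R4) \<Rightarrow> bool" where
  "minimal_surface D z \<longleftrightarrow> (\<forall>q\<in>D. \<forall>ab cd.
      tvec z q ab \<bullet> tvec z q ab = 1 \<and> tvec z q cd \<bullet> tvec z q cd = 1 \<and> tvec z q ab \<bullet> tvec z q cd = 0
      \<longrightarrow> (1/2) *\<^sub>R (sigma z q ab ab + sigma z q cd cd) = 0)"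

text \<open>The invariants k and kappa, computed with a normal frame e1, e2 at z(q).\<close>
definition cc :: "(real \<times> real \<Rightarrow> R4) \<Rightarrow> real \<times> real \<Rightarrow> R4 \<Rightarrow> R4 \<Rightarrow> nat \<Rightarrow> nat \<Rightarrow> nat \<Rightarrow> real" where
  "cc z q e1 e2 i j k =
     (let s = (if i = 1 \<and> j = 1 then sigma11 z q else if i = 2 \<and> j = 2 then sigma22 z q else sigma12 z q)
      in s \<bullet> (if k = 1 then e1 else e2))"

definition Delta1 where "Delta1 z q e1 e2 = cc z q e1 e2 1 1 1 * cc z q e1 e2 1 2 2 - cc z q e1 e2 1 2 1 * cc z q e1 e2 1 1 2"
definition Delta2 where "Delta2 z q e1 e2 = cc z q e1 e2 1 1 1 * cc z q e1 e2 2 2 2 - cc z q e1 e2 2 2 1 * cc z q e1 e2 1 1 2"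
definition Delta3 where "Delta3 z q e1 e2 = cc z q e1 e2 1 2 1 * cc z q e1 e2 2 2 2 - cc z q e1 e2 2 2 1 * cc z q e1 e2 1 2 2"

definition LL where "LL z q e1 e2 = 2 * Delta1 z q e1 e2 / WW z q"
definition MM where "MM z q e1 e2 = Delta2 z q e1 e2 / WW z q"
definition NN where "NN z q e1 e2 = 2 * Delta3 z q e1 e2 / WW z q"

definition kinv where
  "kinv z q e1 e2 = (LL z q e1 e2 * NN z q e1 e2 - (MM z q e1 e2)^2) / (EE z q * GG z q - (FF z q)^2)"
definition varkappa where
  "varkappa z q e1 e2 = (EE z q * NN z q e1 e2 + GG z q * LL z q e1 e2 - 2 * FF z q * MM z q e1 e2)
        / (2 * (EE z q * GG z q - (FF z q)^2))"

definition pos_oriented :: "R4 \<Rightarrow> R4 \<Rightarrow> R4 \<Rightarrow> R4 \<Rightarrow> bool" where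
  "pos_oriented a b c d \<longleftrightarrow> det (vector [a, b, c, d] :: real^4^4) > 0"

definition adapted_normal_frame :: "(real \<times> real \<Rightarrow> R4) \<Rightarrow> real \<times> real \<Rightarrow> R4 \<Rightarrow> R4 \<Rightarrow> bool" where
  "adapted_normal_frame z q e1 e2 \<longleftrightarrow>
     e1 \<bullet> e1 = 1 \<and> e2 \<bullet> e2 = 1 \<and> e1 \<bullet> e2 = 0 \<and>
     e1 \<bullet> pu z q = 0 \<and> e1 \<bullet> pv z q = 0 \<and> e2 \<bullet> pu z q = 0 \<and> e2 \<bullet> pv z q = 0 \<and>
     pos_oriented (pu z q) (pv z q) e1 e2"

text \<open>Vector fields on M are maps D \<rightarrow> R^4 (ambient-valued). For a tangent field X, the
  coordinate components (a,b) with X = a z_u + b z_v, and the derivative of any field f in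
  direction X: X(f) = a f_u + b f_v (= flat connection nabla'_X f for R^4-valued f).\<close>
definition tcoords :: "(real \<times> real \<Rightarrow> R4) \<Rightarrow> (real \<times> real \<Rightarrow> R4) \<Rightarrow> real \<times> real \<Rightarrow> real \<times> real" where
  "tcoords z X q = (THE ab. X q = tvec z q ab)"

definition dirder :: "(real \<times> real \<Rightarrow> R4) \<Rightarrow> (real \<times> real \<Rightarrow> R4) \<Rightarrow> (real \<times> real \<Rightarrow> 'a::real_normed_vector)
    \<Rightarrow> real \<times> real \<Rightarrow> 'a" where
  "dirder z X f q = fst (tcoords z X q) *\<^sub>R pu f q + snd (tcoords z X q) *\<^sub>R pv f q"

definition lie_bracket :: "(real \<times> real \<Rightarrow> R4) \<Rightarrow> (real \<times> real \<Rightarrow> R4) \<Rightarrow> (real \<times> real \<Rightarrow> R4) \<Rightarrow> real \<times> real \<Rightarrow> R4" where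
  "lie_bracket z X Y q =
     (dirder z X (\<lambda>r. fst (tcoords z Y r)) q - dirder z Y (\<lambda>r. fst (tcoords z X r)) q) *\<^sub>R pu z q
   + (dirder z X (\<lambda>r. snd (tcoords z Y r)) q - dirder z Y (\<lambda>r. snd (tcoords z X r)) q) *\<^sub>R pv z q"

definition normal_conn :: "(real \<times> real \<Rightarrow> R4) \<Rightarrow> (real \<times> real \<Rightarrow> R4) \<Rightarrow> (real \<times> real \<Rightarrow> R4) \<Rightarrow> real \<times> real \<Rightarrow> R4" where
  "normal_conn z X V = (\<lambda>q. normal_part z q (dirder z X V q))"

definition normal_curv :: "(real \<times> real \<Rightarrow> R4) \<Rightarrow> (real \<times> real \<Rightarrow> R4) \<Rightarrow> (real \<times> real \<Rightarrow> R4)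
    \<Rightarrow> (real \<times> real \<Rightarrow> R4) \<Rightarrow> real \<times> real \<Rightarrow> R4" where
  "normal_curv z X Y V q = normal_conn z X (normal_conn z Y V) q - normal_conn z Y (normal_conn z X V) q
      - normal_conn z (lie_bracket z X Y) V q"

end

theory Submission
  imports Defs
begin

lemma fd_eq: "(f has_derivative f') (at q) \<Longrightarrow> frechet_derivative f (at q) = f'"
  using frechet_derivative_at by metis

lemma fd_works: "f differentiable at q \<Longrightarrow> (f has_derivative frechet_derivative f (at q)) (at q)"
  by (simp add: frechet_derivative_works)

lemma fd_add:
  assumes "f differentiable at q" "g differentiable at q"
  shows "frechet_derivative (\<lambda>r. f r + g r) (at q) h = frechet_derivative f (at q) h + frechet_derivative g (at q) h"
  using fd_eq[OF has_derivative_add[OF fd_works[OF assms(1)] fd_works[OF assms(2)]]] by simp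

lemma fd_diff:
  assumes "f differentiable at q" "g differentiable at q"
  shows "frechet_derivative (\<lambda>r. f r - g r) (at q) h = frechet_derivative f (at q) h - frechet_derivative g (at q) h"
  using fd_eq[OF has_derivative_diff[OF fd_works[OF assms(1)] fd_works[OF assms(2)]]] by simp

lemma fd_scaleR:
  fixes f :: "_ \<Rightarrow> real"
  assumes "f differentiable at q" "g differentiable at q"
  shows "frechet_derivative (\<lambda>r. f r *\<^sub>R g r) (at q) h = f q *\<^sub>R frechet_derivative g (at q) h + frechet_derivative f (at q) h *\<^sub>R g q"
  using fd_eq[OF has_derivative_scaleR[OF fd_works[OF assms(1)] fd_works[OF assms(2)]]] by simp

lemma fd_mult:
  fixes f :: "_ \<Rightarrow> real"
  assumes "f differentiable at q" "g differentiable at q"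
  shows "frechet_derivative (\<lambda>r. f r * g r) (at q) h = f q * frechet_derivative g (at q) h + frechet_derivative f (at q) h * g q"
  using fd_eq[OF has_derivative_mult[OF fd_works[OF assms(1)] fd_works[OF assms(2)]]] by simp

lemma fd_inner:
  assumes "f differentiable at q" "g differentiable at q"
  shows "frechet_derivative (\<lambda>r. f r \<bullet> g r) (at q) h = f q \<bullet> frechet_derivative g (at q) h + frechet_derivative f (at q) h \<bullet> g q"
  using fd_eq[OF has_derivative_inner[OF fd_works[OF assms(1)] fd_works[OF assms(2)]]] by simp

lemma fd_const: "frechet_derivative (\<lambda>r. c) (at q) h = 0"
  using fd_eq[OF has_derivative_const] by simp

lemma fd_cong:
  assumes "open S" "q \<in> S" "\<And>r. r \<in> S \<Longrightarrow> f r = g r"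
  shows "frechet_derivative f (at q) = frechet_derivative g (at q)"
proof -
  have "\<And>f'. (f has_derivative f') (at q) = (g has_derivative f') (at q)"
    using has_derivative_transform_within_open assms by (metis)
  then show ?thesis unfolding frechet_derivative_def by simp
qed

lemma pu_cong: "open S \<Longrightarrow> q \<in> S \<Longrightarrow> (\<And>r. r \<in> S \<Longrightarrow> f r = g r) \<Longrightarrow> pu f q = pu g q"
  unfolding pu_def using fd_cong by metis
lemma pv_cong: "open S \<Longrightarrow> q \<in> S \<Longrightarrow> (\<And>r. r \<in> S \<Longrightarrow> f r = g r) \<Longrightarrow> pv f q = pv g q"
  unfolding pv_def using fd_cong by metis

lemma diff_cong: "open S \<Longrightarrow> q \<in> S \<Longrightarrow> (\<And>r. r \<in> S \<Longrightarrow> f r = g r) \<Longrightarrow> f differentiable at q \<Longrightarrow> g differentiable at q"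
  unfolding differentiable_def using has_derivative_transform_within_open by metis

lemma pu_eq: "pu f q = frechet_derivative f (at q) (1,0)" by (simp add: pu_def)
lemma pv_eq: "pv f q = frechet_derivative f (at q) (0,1)" by (simp add: pv_def)
lemma pu_add: assumes "f differentiable at q" "g differentiable at q"
  shows "pu (\<lambda>r. f r + g r) q = pu f q + pu g q"
  unfolding pu_eq by (rule fd_add[OF assms])
lemma pu_diff: assumes "f differentiable at q" "g differentiable at q"
  shows "pu (\<lambda>r. f r - g r) q = pu f q - pu g q"
  unfolding pu_eq by (rule fd_diff[OF assms])
lemma pu_scaleR: fixes f :: "_ \<Rightarrow> real" assumes "f differentiable at q" "g differentiable at q"
  shows "pu (\<lambda>r. f r *\<^sub>R g r) q = f q *\<^sub>R pu g q + pu f q *\<^sub>R g q"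
  unfolding pu_eq by (rule fd_scaleR[OF assms])
lemma pu_mult: fixes f :: "_ \<Rightarrow> real" assumes "f differentiable at q" "g differentiable at q"
  shows "pu (\<lambda>r. f r * g r) q = f q * pu g q + pu f q * g q"
  unfolding pu_eq by (rule fd_mult[OF assms])
lemma pu_inner: assumes "f differentiable at q" "g differentiable at q"
  shows "pu (\<lambda>r. f r \<bullet> g r) q = f q \<bullet> pu g q + pu f q \<bullet> g q"
  unfolding pu_eq by (rule fd_inner[OF assms])
lemma pu_const: "pu (\<lambda>r. c) q = 0" unfolding pu_eq by (rule fd_const)
lemma pv_add: assumes "f differentiable at q" "g differentiable at q"
  shows "pv (\<lambda>r. f r + g r) q = pv f q + pv g q"
  unfolding pv_eq by (rule fd_add[OF assms])
lemma pv_diff: assumes "f differentiable at q" "g differentiable at q"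
  shows "pv (\<lambda>r. f r - g r) q = pv f q - pv g q"
  unfolding pv_eq by (rule fd_diff[OF assms])
lemma pv_scaleR: fixes f :: "_ \<Rightarrow> real" assumes "f differentiable at q" "g differentiable at q"
  shows "pv (\<lambda>r. f r *\<^sub>R g r) q = f q *\<^sub>R pv g q + pv f q *\<^sub>R g q"
  unfolding pv_eq by (rule fd_scaleR[OF assms])
lemma pv_mult: fixes f :: "_ \<Rightarrow> real" assumes "f differentiable at q" "g differentiable at q"
  shows "pv (\<lambda>r. f r * g r) q = f q * pv g q + pv f q * g q"
  unfolding pv_eq by (rule fd_mult[OF assms])
lemma pv_inner: assumes "f differentiable at q" "g differentiable at q"
  shows "pv (\<lambda>r. f r \<bullet> g r) q = f q \<bullet> pv g q + pv f q \<bullet> g q"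
  unfolding pv_eq by (rule fd_inner[OF assms])
lemma pv_const: "pv (\<lambda>r. c) q = 0" unfolding pv_eq by (rule fd_const)
lemmas pu_simps = pu_add pu_diff pu_scaleR pu_mult pu_inner pu_const
lemmas pv_simps = pv_add pv_diff pv_scaleR pv_mult pv_inner pv_const

lemma fd_lin2:
  assumes "f differentiable at q"
  shows "frechet_derivative f (at q) (s,t) = s *\<^sub>R pu f q + t *\<^sub>R pv f q"
proof -
  have bl: "linear (frechet_derivative f (at q))"
    using fd_works[OF assms] has_derivative_linear by blast
  have "(s,t) = s *\<^sub>R (1,0) + t *\<^sub>R (0::real,1::real)" by simp
  then have "frechet_derivative f (at q) (s,t) = frechet_derivative f (at q) (s *\<^sub>R (1,0) + t *\<^sub>R (0,1))"
    by metis
  also have "\<dots> = s *\<^sub>R frechet_derivative f (at q) (1,0) + t *\<^sub>R frechet_derivative f (at q) (0,1)"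
    by (simp only: linear_add[OF bl] linear_scale[OF bl])
  finally show ?thesis unfolding pu_def pv_def .
qed


lemma hd_u:
  assumes "f differentiable at (a+t, c)"
  shows "((\<lambda>s. f (a+s, c)) has_derivative (\<lambda>s. s *\<^sub>R pu f (a+t,c))) (at t)"
proof -
  have g: "((\<lambda>s. (a+s, c)) has_derivative (\<lambda>s. (s, 0))) (at t)"
    by (auto intro!: derivative_eq_intros)
  have "((f \<circ> (\<lambda>s. (a+s, c))) has_derivative (frechet_derivative f (at (a+t,c)) \<circ> (\<lambda>s. (s, 0)))) (at t)"
    by (rule diff_chain_at[OF g]) (simp add: fd_works[OF assms])
  moreover have "(frechet_derivative f (at (a+t,c)) \<circ> (\<lambda>s. (s, 0))) = (\<lambda>s. s *\<^sub>R pu f (a+t,c))"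
    using fd_lin2[OF assms] by (auto simp: fun_eq_iff)
  ultimately show ?thesis by (simp add: o_def)
qed

lemma hd_v:
  assumes "f differentiable at (c, b+t)"
  shows "((\<lambda>s. f (c, b+s)) has_derivative (\<lambda>s. s *\<^sub>R pv f (c, b+t))) (at t)"
proof -
  have g: "((\<lambda>s. (c, b+s)) has_derivative (\<lambda>s. (0, s))) (at t)"
    by (auto intro!: derivative_eq_intros)
  have "((f \<circ> (\<lambda>s. (c, b+s))) has_derivative (frechet_derivative f (at (c,b+t)) \<circ> (\<lambda>s. (0, s)))) (at t)"
    by (rule diff_chain_at[OF g]) (simp add: fd_works[OF assms])
  moreover have "(frechet_derivative f (at (c,b+t)) \<circ> (\<lambda>s. (0, s))) = (\<lambda>s. s *\<^sub>R pv f (c,b+t))"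
    using fd_lin2[OF assms] by (auto simp: fun_eq_iff)
  ultimately show ?thesis by (simp add: o_def)
qed

lemma deriv_approx:
  assumes "g differentiable at p" "e > 0"
  shows "\<exists>d>0. \<forall>s t::real. norm (s,t) < d \<longrightarrow>
     norm (g (fst p + s, snd p + t) - g p - (s *\<^sub>R pu g p + t *\<^sub>R pv g p)) \<le> e * norm (s,t)"
proof -
  have "(g has_derivative frechet_derivative g (at p)) (at p)" using fd_works[OF assms(1)] .
  then obtain d where d: "d>0" "\<forall>y. norm(y - p) < d \<longrightarrow> norm (g y - g p - frechet_derivative g (at p) (y - p)) \<le> e * norm (y - p)"
    using assms(2) unfolding has_derivative_at_alt by blast
  show ?thesis
  proof (intro exI[of _ d] conjI allI impI)
    fix s t :: real assume st: "norm (s,t) < d"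
    have e: "(fst p + s, snd p + t) - p = (s,t)" by (cases p) auto
    show "norm (g (fst p + s, snd p + t) - g p - (s *\<^sub>R pu g p + t *\<^sub>R pv g p)) \<le> e * norm (s,t)"
      using d(2)[rule_format, of "(fst p + s, snd p + t)"] st unfolding e fd_lin2[OF assms(1)] by simp
  qed (use d in auto)
qed

lemma norm_pair_le: "norm (s::real, t::real) \<le> \<bar>s\<bar> + \<bar>t\<bar>"
  unfolding norm_Pair real_norm_def using sqrt_sum_squares_le_sum_abs[of s t] by simp

lemma schwarz_real:
  fixes f :: "real \<times> real \<Rightarrow> real"
  assumes S: "open S" "p \<in> S" and df: "\<And>q. q \<in> S \<Longrightarrow> f differentiable at q"
    and du: "pu f differentiable at p" and dv: "pv f differentiable at p"
  shows "pv (pu f) p = pu (pv f) p"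
proof (rule ccontr)
  assume ne: "pv (pu f) p \<noteq> pu (pv f) p"
  define B where "B = pv (pu f) p"
  define B' where "B' = pu (pv f) p"
  define e where "e = \<bar>B - B'\<bar> / 12"
  have e: "e > 0" using ne unfolding e_def B_def B'_def by simp
  obtain a b where p: "p = (a,b)" by (cases p)
  obtain r where r: "r > 0" "ball p r \<subseteq> S" using S openE by blast
  obtain d1 where d1: "d1>0" "\<forall>s t. norm (s,t) < d1 \<longrightarrow>
     norm (pu f (a + s, b + t) - pu f p - (s *\<^sub>R pu (pu f) p + t *\<^sub>R pv (pu f) p)) \<le> e * norm (s,t)"
    using deriv_approx[OF du e] unfolding p by auto
  obtain d2 where d2: "d2>0" "\<forall>s t. norm (s,t) < d2 \<longrightarrow>
     norm (pv f (a + s, b + t) - pv f p - (s *\<^sub>R pu (pv f) p + t *\<^sub>R pv (pv f) p)) \<le> e * norm (s,t)"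
    using deriv_approx[OF dv e] unfolding p by auto
  define h where "h = min (min d1 d2) r / 3"
  have h: "h > 0" "2*h < d1" "2*h < d2" "2*h < r" using d1 d2 r unfolding h_def by auto
  have inS: "(a+s, b+t) \<in> S" if "0 \<le> s" "s \<le> h" "0 \<le> t" "t \<le> h" for s t
  proof -
    have "dist p (a+s, b+t) \<le> \<bar>s\<bar> + \<bar>t\<bar>" unfolding p dist_norm
      using norm_pair_le[of "-s" "-t"] by simp
    then show ?thesis using r that h by (auto simp: subset_iff)
  qed
  define Dl where "Dl = f (a+h, b+h) - f (a+h, b) - f (a, b+h) + f (a, b)"
  have est1: "\<bar>Dl - h*h*B\<bar> \<le> 3*e*h*h"
  proof -
    have "\<exists>x\<in>{0<..<h}. (\<lambda>s. f (a+s, b+h) - f (a+s, b)) h - (\<lambda>s. f (a+s, b+h) - f (a+s, b)) 0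
        = (\<lambda>s. s *\<^sub>R pu f (a+x,b+h) - s *\<^sub>R pu f (a+x,b)) (h - 0)"
    proof (rule mvt_simple[OF h(1)])
      fix x assume x: "0 \<le> x" "x \<le> h"
      show "((\<lambda>s. f (a+s, b+h) - f (a+s, b)) has_derivative (\<lambda>s. s *\<^sub>R pu f (a+x,b+h) - s *\<^sub>R pu f (a+x,b))) (at x within {0..h})"
        proof -
        have m: "(a+x, b) \<in> S" "(a+x, b+h) \<in> S" using inS[of x 0] inS[of x h] x h by auto
        show ?thesis by (rule has_derivative_at_withinI, intro has_derivative_diff hd_u df m)
      qed
    qed
    then obtain x where x: "0 < x" "x < h" and eq: "Dl = h * (pu f (a+x,b+h) - pu f (a+x,b))"
      unfolding Dl_def by (auto simp: right_diff_distrib)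
    have n1: "norm (x, h) < d1" "norm (x, 0::real) < d1"
      using norm_pair_le[of x h] x h by auto
    have A1: "\<bar>pu f (a + x, b + h) - pu f p - (x * pu (pu f) p + h * B)\<bar> \<le> e * norm (x,h)"
      using d1(2)[rule_format, OF n1(1)] unfolding B_def by simp
    have A2: "\<bar>pu f (a + x, b) - pu f p - (x * pu (pu f) p)\<bar> \<le> e * norm (x,0::real)"
      using d1(2)[rule_format, OF n1(2)] by simp
    have "norm (x,h) \<le> 2*h" "norm (x, 0::real) \<le> h" using norm_pair_le[of x h] x by auto
    then have "e * norm (x,h) \<le> e * (2*h)" "e * norm (x,0::real) \<le> e * h"
      using e by (auto intro: mult_left_mono)
    then have "\<bar>pu f (a+x,b+h) - pu f (a+x,b) - h * B\<bar> \<le> 3 * e * h"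
      using A1 A2 by (simp add: abs_le_iff algebra_simps)
    then have "h * \<bar>pu f (a+x,b+h) - pu f (a+x,b) - h * B\<bar> \<le> h * (3 * e * h)"
      using h by (simp add: mult_left_mono)
    moreover have "Dl - h*h*B = h * (pu f (a+x,b+h) - pu f (a+x,b) - h * B)"
      unfolding eq by (simp add: algebra_simps)
    ultimately show ?thesis using h(1) by (simp add: abs_mult)
  qed
  have est2: "\<bar>Dl - h*h*B'\<bar> \<le> 3*e*h*h"
  proof -
    have "\<exists>x\<in>{0<..<h}. (\<lambda>s. f (a+h, b+s) - f (a, b+s)) h - (\<lambda>s. f (a+h, b+s) - f (a, b+s)) 0
        = (\<lambda>s. s *\<^sub>R pv f (a+h,b+x) - s *\<^sub>R pv f (a,b+x)) (h - 0)"
    proof (rule mvt_simple[OF h(1)])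
      fix x assume x: "0 \<le> x" "x \<le> h"
      have m: "(a, b+x) \<in> S" "(a+h, b+x) \<in> S" using inS[of 0 x] inS[of h x] x h by auto
      show "((\<lambda>s. f (a+h, b+s) - f (a, b+s)) has_derivative (\<lambda>s. s *\<^sub>R pv f (a+h,b+x) - s *\<^sub>R pv f (a,b+x))) (at x within {0..h})"
        by (rule has_derivative_at_withinI, intro has_derivative_diff hd_v df m)
    qed
    then obtain x where x: "0 < x" "x < h" and eq: "Dl = h * (pv f (a+h,b+x) - pv f (a,b+x))"
      unfolding Dl_def by (auto simp: right_diff_distrib)
    have n1: "norm (h, x) < d2" "norm (0::real, x) < d2"
      using norm_pair_le[of h x] norm_pair_le[of 0 x] x h by auto
    have A1: "\<bar>pv f (a + h, b + x) - pv f p - (h * B' + x * pv (pv f) p)\<bar> \<le> e * norm (h,x)"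
      using d2(2)[rule_format, OF n1(1)] unfolding B'_def by simp
    have A2: "\<bar>pv f (a, b + x) - pv f p - (x * pv (pv f) p)\<bar> \<le> e * norm (0::real,x)"
      using d2(2)[rule_format, OF n1(2)] by simp
    have "norm (h,x) \<le> 2*h" "norm (0::real, x) \<le> h" using norm_pair_le[of h x] norm_pair_le[of 0 x] x by auto
    then have "e * norm (h,x) \<le> e * (2*h)" "e * norm (0::real,x) \<le> e * h"
      using e by (auto intro: mult_left_mono)
    then have "\<bar>pv f (a+h,b+x) - pv f (a,b+x) - h * B'\<bar> \<le> 3 * e * h"
      using A1 A2 by (simp add: abs_le_iff algebra_simps)
    then have "h * \<bar>pv f (a+h,b+x) - pv f (a,b+x) - h * B'\<bar> \<le> h * (3 * e * h)"
      using h by (simp add: mult_left_mono)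
    moreover have "Dl - h*h*B' = h * (pv f (a+h,b+x) - pv f (a,b+x) - h * B')"
      unfolding eq by (simp add: algebra_simps)
    ultimately show ?thesis using h(1) by (simp add: abs_mult)
  qed
  have "\<bar>h*h*B - h*h*B'\<bar> \<le> 6*e*h*h"
    using est1 est2 by (simp add: abs_le_iff)
  moreover have "h*h*B - h*h*B' = (h*h)*(B - B')" by (simp add: algebra_simps)
  moreover have "\<bar>(h*h)*(B - B')\<bar> = (h*h)*\<bar>B - B'\<bar>" by (simp add: abs_mult)
  ultimately have "(h*h)*\<bar>B - B'\<bar> \<le> (h*h)*(6*e)" by (simp add: algebra_simps)
  then have "\<bar>B - B'\<bar> \<le> 6*e" using h(1)
    by (simp add: mult_le_cancel_left_pos)
  then show False using e unfolding e_def by simp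
qed

lemma det_4:
  "det (A::'a::comm_ring_1^4^4) =
    A$1$1 * A$2$2 * A$3$3 * A$4$4 - A$1$1 * A$2$2 * A$3$4 * A$4$3
  - A$1$1 * A$2$3 * A$3$2 * A$4$4 + A$1$1 * A$2$3 * A$3$4 * A$4$2
  + A$1$1 * A$2$4 * A$3$2 * A$4$3 - A$1$1 * A$2$4 * A$3$3 * A$4$2
  - A$1$2 * A$2$1 * A$3$3 * A$4$4 + A$1$2 * A$2$1 * A$3$4 * A$4$3
  + A$1$2 * A$2$3 * A$3$1 * A$4$4 - A$1$2 * A$2$3 * A$3$4 * A$4$1
  - A$1$2 * A$2$4 * A$3$1 * A$4$3 + A$1$2 * A$2$4 * A$3$3 * A$4$1
  + A$1$3 * A$2$1 * A$3$2 * A$4$4 - A$1$3 * A$2$1 * A$3$4 * A$4$2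
  - A$1$3 * A$2$2 * A$3$1 * A$4$4 + A$1$3 * A$2$2 * A$3$4 * A$4$1
  + A$1$3 * A$2$4 * A$3$1 * A$4$2 - A$1$3 * A$2$4 * A$3$2 * A$4$1
  - A$1$4 * A$2$1 * A$3$2 * A$4$3 + A$1$4 * A$2$1 * A$3$3 * A$4$2
  + A$1$4 * A$2$2 * A$3$1 * A$4$3 - A$1$4 * A$2$2 * A$3$3 * A$4$1
  - A$1$4 * A$2$3 * A$3$1 * A$4$2 + A$1$4 * A$2$3 * A$3$2 * A$4$1"
proof -
  have f1: "finite {2::4, 3, 4}" "1 \<notin> {2::4, 3, 4}" by auto
  have f2: "finite {3::4, 4}" "2 \<notin> {3::4, 4}" by auto
  have f3: "finite {4::4}" "3 \<notin> {4::4}" by auto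
  have U: "(UNIV::4 set) = {1,2,3,4}" by (rule UNIV_4)
  show ?thesis
    unfolding det_def U
    unfolding sum_over_permutations_insert[OF f1]
    unfolding sum_over_permutations_insert[OF f2]
    unfolding sum_over_permutations_insert[OF f3]
    unfolding permutes_sing
    by (simp add: sign_swap_id permutation_swap_id sign_compose permutation_compose sign_id swap_id_eq algebra_simps)
qed


lemma vector4_nth [simp]:
  "(vector [a,b,c,d] :: 'a::zero^4) $ 1 = a" "(vector [a,b,c,d] :: 'a^4) $ 2 = b"
  "(vector [a,b,c,d] :: 'a^4) $ 3 = c" "(vector [a,b,c,d] :: 'a^4) $ 4 = d"
  by (simp_all add: vector_def)

lemma det_frame_change:
  fixes zu zv e1 e2 :: "real^4"
  shows "det (vector [a1 *\<^sub>R zu + a2 *\<^sub>R zv, b1 *\<^sub>R zu + b2 *\<^sub>R zv, t11 *\<^sub>R e1 + t12 *\<^sub>R e2, t21 *\<^sub>R e1 + t22 *\<^sub>R e2] :: real^4^4)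
    = (a1*b2 - a2*b1) * (t11*t22 - t12*t21) * det (vector [zu, zv, e1, e2] :: real^4^4)"
proof -
  define M :: "real^4^4" where "M = vector [vector [a1,a2,0,0], vector [b1,b2,0,0], vector [0,0,t11,t12], vector [0,0,t21,t22]]"
  have "(vector [a1 *\<^sub>R zu + a2 *\<^sub>R zv, b1 *\<^sub>R zu + b2 *\<^sub>R zv, t11 *\<^sub>R e1 + t12 *\<^sub>R e2, t21 *\<^sub>R e1 + t22 *\<^sub>R e2] :: real^4^4)
     = M ** vector [zu, zv, e1, e2]"
    unfolding M_def by (simp add: vec_eq_iff forall_4 matrix_matrix_mult_def sum_4)
  moreover have "det M = (a1*b2 - a2*b1) * (t11*t22 - t12*t21)"
    unfolding M_def det_4 by (simp add: algebra_simps)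
  ultimately show ?thesis by (simp add: det_mul)
qed

lemma inv_gram:
  fixes a1 a2 b1 b2 E F G :: real
  assumes o1: "a1^2*E + 2*a1*a2*F + a2^2*G = 1" and o2: "b1^2*E + 2*b1*b2*F + b2^2*G = 1"
    and o3: "a1*b1*E + (a1*b2+a2*b1)*F + a2*b2*G = 0"
  shows "a1^2+b1^2 = G*(a1*b2-a2*b1)^2" "a1*a2+b1*b2 = -F*(a1*b2-a2*b1)^2" "a2^2+b2^2 = E*(a1*b2-a2*b1)^2"
  using assms by algebra+

lemma final_alg:
  fixes a1 a2 b1 b2 E F G T11 T12 T21 T22 h111 h112 h122 h211 h212 h222 :: real
  assumes o1: "a1^2*E + 2*a1*a2*F + a2^2*G = 1" and o2: "b1^2*E + 2*b1*b2*F + b2^2*G = 1"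
    and o3: "a1*b1*E + (a1*b2+a2*b1)*F + a2*b2*G = 0"
    and W2: "E*G - F^2 > 0"
    and t1: "T11^2 + T21^2 = 1" and t2: "T12^2 + T22^2 = 1" and t3: "T11*T12 + T21*T22 = 0"
    and ori: "(a1*b2 - a2*b1)*(T11*T22 - T12*T21) > 0"
  defines "c111 \<equiv> h111*T11 + h211*T21" and "c112 \<equiv> h111*T12 + h211*T22"
      and "c121 \<equiv> h112*T11 + h212*T21" and "c122 \<equiv> h112*T12 + h212*T22"
      and "c221 \<equiv> h122*T11 + h222*T21" and "c222 \<equiv> h122*T12 + h222*T22"
      and "W \<equiv> sqrt (E*G - F^2)"
  shows "(E * (2*(c121*c222 - c221*c122)/W) + G*(2*(c111*c122 - c121*c112)/W) - 2*F*((c111*c222 - c221*c112)/W))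
          / (2*(E*G - F^2))
       = (a1*b2 - a2*b1) * ((a1^2+b1^2)*(h111*h212 - h112*h211) + (a1*a2+b1*b2)*(h111*h222 - h122*h211)
            + (a2^2+b2^2)*(h112*h222 - h122*h212))"
proof -
  define d where "d = a1*b2 - a2*b1"
  define ep where "ep = T11*T22 - T12*T21"
  define D1 where "D1 = h111*h212 - h112*h211"
  define D2 where "D2 = h111*h222 - h122*h211"
  define D3 where "D3 = h112*h222 - h122*h212"
  note ig = inv_gram[OF o1 o2 o3, folded d_def]
  have dW: "d^2 * (E*G - F^2) = 1"
  proof -
    have "d^2 * (E*G - F^2) = (a1^2*E + 2*a1*a2*F + a2^2*G)*(b1^2*E + 2*b1*b2*F + b2^2*G) - (a1*b1*E + (a1*b2+a2*b1)*F + a2*b2*G)^2"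
      unfolding d_def by algebra
    then show ?thesis using o1 o2 o3 by simp
  qed
  have ep2: "ep^2 = 1"
  proof -
    have "ep^2 = (T11^2 + T21^2)*(T12^2 + T22^2) - (T11*T12 + T21*T22)^2" unfolding ep_def by algebra
    then show ?thesis using t1 t2 t3 by simp
  qed
  have Wpos: "W > 0" unfolding W_def using W2 by simp
  have WW: "W^2 = E*G - F^2" unfolding W_def using W2 by simp
  have de: "d*ep = 1/W"
  proof -
    have "d^2 * W^2 = 1" using dW WW by simp
    then have "d^2 = 1/W^2" using Wpos by (simp add: field_simps)
    then have "(d*ep)^2 = (1/W)^2" using ep2 by (simp add: power_mult_distrib power_one_over)
    moreover have "d*ep > 0" using ori unfolding d_def ep_def .
    ultimately show ?thesis using Wpos
      by (metis less_eq_real_def power2_eq_iff_nonneg zero_le_divide_1_iff)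
  qed
  have dd: "d = ep / W"
  proof -
    have "ep / W = ep * (d*ep)" using de by simp
    also have "\<dots> = d * ep^2" by (simp add: power2_eq_square)
    finally show ?thesis using ep2 by simp
  qed
  have C1: "c111*c122 - c121*c112 = ep * D1" unfolding c111_def c122_def c121_def c112_def ep_def D1_def by algebra
  have C2: "c111*c222 - c221*c112 = ep * D2" unfolding c111_def c222_def c221_def c112_def ep_def D2_def by algebra
  have C3: "c121*c222 - c221*c122 = ep * D3" unfolding c121_def c222_def c221_def c122_def ep_def D3_def by algebra
  have "(E * (2*(c121*c222 - c221*c122)/W) + G*(2*(c111*c122 - c121*c112)/W) - 2*F*((c111*c222 - c221*c112)/W))
          / (2*(E*G - F^2)) = (ep / W) * (E*D3 + G*D1 - F*D2) / (E*G - F^2)"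
    unfolding C1 C2 C3 using W2 Wpos by (simp add: field_simps)
  also have "\<dots> = d * (E*D3 + G*D1 - F*D2) * d^2" using dW W2 unfolding dd[symmetric]
    by (simp add: field_simps)
  also have "\<dots> = d * ((a1^2+b1^2)*D1 + (a1*a2+b1*b2)*D2 + (a2^2+b2^2)*D3)"
    unfolding ig by (simp add: algebra_simps)
  finally show ?thesis unfolding d_def D1_def D2_def D3_def .
qed

lemma on_expand4:
  fixes u1 u2 u3 u4 w :: "real^4"
  assumes o: "u1\<bullet>u1=1" "u2\<bullet>u2=1" "u3\<bullet>u3=1" "u4\<bullet>u4=1" "u1\<bullet>u2=0" "u1\<bullet>u3=0" "u1\<bullet>u4=0"
    "u2\<bullet>u3=0" "u2\<bullet>u4=0" "u3\<bullet>u4=0"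
  shows "w = (w\<bullet>u1) *\<^sub>R u1 + (w\<bullet>u2) *\<^sub>R u2 + (w\<bullet>u3) *\<^sub>R u3 + (w\<bullet>u4) *\<^sub>R u4"
proof -
  define B where "B = {u1,u2,u3,u4}"
  have ne: "u1 \<noteq> u2" "u1 \<noteq> u3" "u1 \<noteq> u4" "u2 \<noteq> u3" "u2 \<noteq> u4" "u3 \<noteq> u4"
    using o by (metis inner_commute zero_neq_one)+
  have nz: "0 \<notin> B" using o unfolding B_def by auto
  have po: "pairwise orthogonal B" unfolding B_def pairwise_def orthogonal_def
    using o by (auto simp: inner_commute)
  have ind: "independent B" by (rule pairwise_orthogonal_independent[OF po nz])
  have cB: "card B = 4" unfolding B_def using ne by auto
  have "UNIV \<subseteq> span B"
    using card_eq_dim[of B UNIV] ind cB unfolding B_def by auto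
  define r where "r = w - ((w\<bullet>u1) *\<^sub>R u1 + (w\<bullet>u2) *\<^sub>R u2 + (w\<bullet>u3) *\<^sub>R u3 + (w\<bullet>u4) *\<^sub>R u4)"
  have oc: "u2\<bullet>u1=0" "u3\<bullet>u1=0" "u4\<bullet>u1=0" "u3\<bullet>u2=0" "u4\<bullet>u2=0" "u4\<bullet>u3=0"
    using o by (simp_all add: inner_commute)
  have orth: "orthogonal r y" if "y \<in> B" for y
    using that o oc unfolding B_def r_def orthogonal_def
    by (auto simp: inner_diff_left inner_add_left)
  have "orthogonal r r"
    by (rule orthogonal_to_span[of r B r]) (use \<open>UNIV \<subseteq> span B\<close> orth in auto)
  then have "r = 0" unfolding orthogonal_def by simp
  then show ?thesis unfolding r_def by simp
qed

lemma span2_E: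
  fixes X a b :: "'a::real_vector"
  assumes "X \<in> span {a, b}"
  obtains s t where "X = s *\<^sub>R a + t *\<^sub>R b"
proof -
  from assms obtain k where "X - k *\<^sub>R a \<in> span {b}" unfolding span_insert by auto
  then obtain c where "X - k *\<^sub>R a = c *\<^sub>R b" unfolding span_singleton by auto
  then have "X = k *\<^sub>R a + c *\<^sub>R b" by (simp add: algebra_simps)
  then show ?thesis using that by blast
qed

lemma span2_I: "s *\<^sub>R a + t *\<^sub>R b \<in> span {a, b}"
  by (simp add: span_add span_base span_scale)

lemma orth_span2:
  fixes n :: "'a::real_inner"
  assumes "n \<bullet> a = 0" "n \<bullet> b = 0" "X \<in> span {a, b}"
  shows "n \<bullet> X = 0"
  using assms by (elim span2_E) (simp add: inner_add_right)

lemma coords_unique: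
  fixes u v :: "'a::real_inner"
  assumes W: "(u\<bullet>u)*(v\<bullet>v) - (u\<bullet>v)^2 > 0"
    and eq: "s *\<^sub>R u + t *\<^sub>R v = s' *\<^sub>R u + t' *\<^sub>R v"
  shows "s = s' \<and> t = t'"
proof -
  have "(s - s') *\<^sub>R u + (t - t') *\<^sub>R v = 0" using eq by (simp add: algebra_simps)
  then have e1: "(s - s') * (u\<bullet>u) + (t - t') * (u\<bullet>v) = 0"
        and e2: "(s - s') * (u\<bullet>v) + (t - t') * (v\<bullet>v) = 0"
    by (metis inner_add_left inner_scaleR_left inner_zero_left inner_commute)+
  have "(s - s') * ((u\<bullet>u)*(v\<bullet>v) - (u\<bullet>v)^2) = (v\<bullet>v) * ((s - s') * (u\<bullet>u) + (t - t') * (u\<bullet>v)) - (u\<bullet>v) * ((s - s') * (u\<bullet>v) + (t - t') * (v\<bullet>v))"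
    by (simp add: algebra_simps power2_eq_square)
  then have A: "s - s' = 0" using e1 e2 W by simp
  have "(t - t') * ((u\<bullet>u)*(v\<bullet>v) - (u\<bullet>v)^2) = (u\<bullet>u) * ((s - s') * (u\<bullet>v) + (t - t') * (v\<bullet>v)) - (u\<bullet>v) * ((s - s') * (u\<bullet>u) + (t - t') * (u\<bullet>v))"
    by (simp add: algebra_simps power2_eq_square)
  then have "t - t' = 0" using e1 e2 W by simp
  with A show ?thesis by simp
qed


lemma smooth_D:
  assumes "smooth_on D f" "q \<in> D"
  shows "f differentiable at q" "pu f differentiable at q" "pv f differentiable at q"
proof -
  have "iter_partial bs f differentiable at q" for bs using assms unfolding smooth_on_def by blast
  from this[of "[]"] this[of "[True]"] this[of "[False]"]
  show "f differentiable at q" "pu f differentiable at q" "pv f differentiable at q" by simp_all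
qed

lemma schwarz_vec:
  fixes f :: "real \<times> real \<Rightarrow> real^4"
  assumes S: "open S" "p \<in> S" and df: "\<And>q. q \<in> S \<Longrightarrow> f differentiable at q"
    and du: "pu f differentiable at p" and dv: "pv f differentiable at p"
  shows "pv (pu f) p = pu (pv f) p"
proof -
  have key: "pv (pu f) p \<bullet> c = pu (pv f) p \<bullet> c" for c
  proof -
    define g where "g = (\<lambda>r. f r \<bullet> c)"
    have pug: "pu g q = pu f q \<bullet> c" if "q \<in> S" for q
      unfolding g_def using pu_simps(5)[OF df[OF that] differentiable_const[of c]] by (simp add: pu_const)
    have pvg: "pv g q = pv f q \<bullet> c" if "q \<in> S" for q
      unfolding g_def using pv_simps(5)[OF df[OF that] differentiable_const[of c]] by (simp add: pv_const)
    have dg: "g differentiable at q" if "q \<in> S" for q unfolding g_def using df[OF that] by simp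
    have dpug: "pu g differentiable at p"
      by (rule diff_cong[OF S, of "\<lambda>r. pu f r \<bullet> c"]) (use pug du in auto)
    have dpvg: "pv g differentiable at p"
      by (rule diff_cong[OF S, of "\<lambda>r. pv f r \<bullet> c"]) (use pvg dv in auto)
    have "pv (pu g) p = pu (pv g) p" by (rule schwarz_real[OF S dg dpug dpvg])
    moreover have "pv (pu g) p = pv (\<lambda>r. pu f r \<bullet> c) p" by (rule pv_cong[OF S]) (simp add: pug)
    moreover have "pu (pv g) p = pu (\<lambda>r. pv f r \<bullet> c) p" by (rule pu_cong[OF S]) (simp add: pvg)
    moreover have "pv (\<lambda>r. pu f r \<bullet> c) p = pv (pu f) p \<bullet> c"
      using pv_simps(5)[OF du differentiable_const[of c]] by (simp add: pv_const)
    moreover have "pu (\<lambda>r. pv f r \<bullet> c) p = pu (pv f) p \<bullet> c"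
      using pu_simps(5)[OF dv differentiable_const[of c]] by (simp add: pu_const)
    ultimately show ?thesis by simp
  qed
  have "(pv (pu f) p - pu (pv f) p) \<bullet> (pv (pu f) p - pu (pv f) p) = 0"
    using key[of "pv (pu f) p - pu (pv f) p"] by (simp add: inner_diff_left)
  then show ?thesis by simp
qed

lemma normal_part_eq:
  assumes sx: "x0 \<in> span {pu z q, pv z q}" and sy: "y0 \<in> span {pu z q, pv z q}"
    and o: "x0\<bullet>x0=1" "y0\<bullet>y0=1" "f1\<bullet>f1=1" "f2\<bullet>f2=1" "x0\<bullet>y0=0" "x0\<bullet>f1=0" "x0\<bullet>f2=0"
    "y0\<bullet>f1=0" "y0\<bullet>f2=0" "f1\<bullet>f2=0"
    and nf: "f1 \<bullet> pu z q = 0" "f1 \<bullet> pv z q = 0" "f2 \<bullet> pu z q = 0" "f2 \<bullet> pv z q = 0"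
  shows "normal_part z q w = (w\<bullet>f1) *\<^sub>R f1 + (w\<bullet>f2) *\<^sub>R f2"
  unfolding normal_part_def
proof (rule the_equality)
  let ?n = "(w\<bullet>f1) *\<^sub>R f1 + (w\<bullet>f2) *\<^sub>R f2"
  have ex: "w = (w\<bullet>x0) *\<^sub>R x0 + (w\<bullet>y0) *\<^sub>R y0 + (w\<bullet>f1) *\<^sub>R f1 + (w\<bullet>f2) *\<^sub>R f2"
    by (rule on_expand4[OF o])
  have "w - ?n = (w\<bullet>x0) *\<^sub>R x0 + (w\<bullet>y0) *\<^sub>R y0"
  proof -
    have "w = ((w\<bullet>x0) *\<^sub>R x0 + (w\<bullet>y0) *\<^sub>R y0) + ?n" using ex by (simp only: add.assoc)
    then show ?thesis by (metis add_diff_cancel_right')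
  qed
  moreover have "(w\<bullet>x0) *\<^sub>R x0 + (w\<bullet>y0) *\<^sub>R y0 \<in> span {pu z q, pv z q}"
    by (intro span_add span_scale sx sy)
  moreover have "?n \<bullet> pu z q = 0" "?n \<bullet> pv z q = 0" using nf by (simp_all add: inner_add_left)
  ultimately show "?n \<bullet> pu z q = 0 \<and> ?n \<bullet> pv z q = 0 \<and> w - ?n \<in> span {pu z q, pv z q}" by simp
  fix n assume n: "n \<bullet> pu z q = 0 \<and> n \<bullet> pv z q = 0 \<and> w - n \<in> span {pu z q, pv z q}"
  have "n - ?n = (w - ?n) - (w - n)" by simp
  then have sp: "n - ?n \<in> span {pu z q, pv z q}"
    using n \<open>w - ?n = _\<close> \<open>(w\<bullet>x0) *\<^sub>R x0 + (w\<bullet>y0) *\<^sub>R y0 \<in> span {pu z q, pv z q}\<close>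
    by (metis span_diff)
  have "(n - ?n) \<bullet> pu z q = 0" "(n - ?n) \<bullet> pv z q = 0" using n nf by (simp_all add: inner_diff_left inner_add_left)
  then have "(n - ?n) \<bullet> (n - ?n) = 0" using orth_span2 sp by blast
  then show "n = ?n" by simp
qed

lemma tcoords_eq:
  assumes W: "EE z q * GG z q - (FF z q)^2 > 0" and X: "X q = s *\<^sub>R pu z q + t *\<^sub>R pv z q"
  shows "tcoords z X q = (s,t)"
  unfolding tcoords_def
proof (rule the_equality)
  show "X q = tvec z q (s,t)" using X by (simp add: tvec_def)
  fix ab assume "X q = tvec z q ab"
  then have "fst ab *\<^sub>R pu z q + snd ab *\<^sub>R pv z q = s *\<^sub>R pu z q + t *\<^sub>R pv z q" using X by (simp add: tvec_def)
  then have "fst ab = s \<and> snd ab = t"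
    by (rule coords_unique[rotated]) (use W in \<open>simp add: EE_def GG_def FF_def\<close>)
  then show "ab = (s,t)" by (cases ab) simp
qed

lemma tcoords_span:
  assumes W: "EE z q * GG z q - (FF z q)^2 > 0" and X: "X q \<in> span {pu z q, pv z q}"
  shows "X q = fst (tcoords z X q) *\<^sub>R pu z q + snd (tcoords z X q) *\<^sub>R pv z q"
proof -
  obtain s t where st: "X q = s *\<^sub>R pu z q + t *\<^sub>R pv z q" using X by (elim span2_E)
  show ?thesis using tcoords_eq[where X=X and q=q and z=z, OF W st] st by simp
qed

lemma tcoords_formula:
  assumes W: "EE z q * GG z q - (FF z q)^2 > 0" and X: "X q \<in> span {pu z q, pv z q}"
  shows "fst (tcoords z X q) = (GG z q * (X q \<bullet> pu z q) - FF z q * (X q \<bullet> pv z q)) / (EE z q * GG z q - (FF z q)^2)"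
    "snd (tcoords z X q) = (EE z q * (X q \<bullet> pv z q) - FF z q * (X q \<bullet> pu z q)) / (EE z q * GG z q - (FF z q)^2)"
proof -
  define s where "s = fst (tcoords z X q)"
  define t where "t = snd (tcoords z X q)"
  have e: "X q = s *\<^sub>R pu z q + t *\<^sub>R pv z q" using tcoords_span[where X=X and q=q and z=z, OF W X] unfolding s_def t_def .
  have i1: "X q \<bullet> pu z q = s * EE z q + t * FF z q" unfolding e EE_def FF_def
    by (simp add: inner_add_left inner_add_right inner_commute)
  have i2: "X q \<bullet> pv z q = s * FF z q + t * GG z q" unfolding e GG_def FF_def
    by (simp add: inner_add_left inner_add_right inner_commute)
  show "fst (tcoords z X q) = (GG z q * (X q \<bullet> pu z q) - FF z q * (X q \<bullet> pv z q)) / (EE z q * GG z q - (FF z q)^2)"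
    unfolding s_def[symmetric] i1 i2 using W by (simp add: field_simps power2_eq_square)
  show "snd (tcoords z X q) = (EE z q * (X q \<bullet> pv z q) - FF z q * (X q \<bullet> pu z q)) / (EE z q * GG z q - (FF z q)^2)"
    unfolding t_def[symmetric] i1 i2 using W by (simp add: field_simps power2_eq_square)
qed

lemma tcoords_diff:
  assumes D: "open D" "p \<in> D" and W: "\<And>q. q \<in> D \<Longrightarrow> EE z q * GG z q - (FF z q)^2 > 0"
    and X: "\<And>q. q \<in> D \<Longrightarrow> X q \<in> span {pu z q, pv z q}"
    and dX: "X differentiable at p" and du: "pu z differentiable at p" and dv: "pv z differentiable at p"
  shows "(\<lambda>r. fst (tcoords z X r)) differentiable at p" "(\<lambda>r. snd (tcoords z X r)) differentiable at p"
proof -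
  have den: "(\<lambda>r. pu z r \<bullet> pu z r * (pv z r \<bullet> pv z r) - (pu z r \<bullet> pv z r)^2) p \<noteq> 0"
    using W[OF D(2)] unfolding EE_def FF_def GG_def by simp
  show "(\<lambda>r. fst (tcoords z X r)) differentiable at p"
    apply (rule diff_cong[OF D, of "\<lambda>r. (GG z r * (X r \<bullet> pu z r) - FF z r * (X r \<bullet> pv z r)) / (EE z r * GG z r - (FF z r)^2)"])
     apply (simp add: tcoords_formula[where X=X and z=z, OF W X])
    unfolding EE_def FF_def GG_def
    using den dX du dv by (intro differentiable_divide differentiable_diff differentiable_mult differentiable_inner differentiable_power) auto
  show "(\<lambda>r. snd (tcoords z X r)) differentiable at p"
    apply (rule diff_cong[OF D, of "\<lambda>r. (EE z r * (X r \<bullet> pv z r) - FF z r * (X r \<bullet> pu z r)) / (EE z r * GG z r - (FF z r)^2)"])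
     apply (simp add: tcoords_formula[where X=X and z=z, OF W X])
    unfolding EE_def FF_def GG_def
    using den dX du dv by (intro differentiable_divide differentiable_diff differentiable_mult differentiable_inner differentiable_power) auto
qed


lemma inner_expand4:
  fixes u1 u2 u3 u4 v w :: "real^4"
  assumes o: "u1\<bullet>u1=1" "u2\<bullet>u2=1" "u3\<bullet>u3=1" "u4\<bullet>u4=1" "u1\<bullet>u2=0" "u1\<bullet>u3=0" "u1\<bullet>u4=0"
    "u2\<bullet>u3=0" "u2\<bullet>u4=0" "u3\<bullet>u4=0"
  shows "v \<bullet> w = (v\<bullet>u1) * (w\<bullet>u1) + (v\<bullet>u2) * (w\<bullet>u2) + (v\<bullet>u3) * (w\<bullet>u3) + (v\<bullet>u4) * (w\<bullet>u4)"
proof -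
  have "v \<bullet> w = v \<bullet> ((w\<bullet>u1) *\<^sub>R u1 + (w\<bullet>u2) *\<^sub>R u2 + (w\<bullet>u3) *\<^sub>R u3 + (w\<bullet>u4) *\<^sub>R u4)"
    using on_expand4[OF o, of w] by metis
  then show ?thesis by (simp add: inner_add_right)
qed

theorem proposition3p4:
  fixes D :: "(real \<times> real) set" and z x y n1 n2 :: "real \<times> real \<Rightarrow> real^4"
    and p :: "real \<times> real" and e1 e2 :: "real^4"
  assumes surf: "regular_surface D z"
    and minimal: "minimal_surface D z"
    and smooth: "smooth_on D x" "smooth_on D y" "smooth_on D n1" "smooth_on D n2"
    and tangent: "\<forall>q\<in>D. x q \<in> span {pu z q, pv z q} \<and> y q \<in> span {pu z q, pv z q}"
    and normal: "\<forall>q\<in>D. n1 q \<bullet> pu z q = 0 \<and> n1 q \<bullet> pv z q = 0 \<and> n2 q \<bullet> pu z q = 0 \<and> n2 q \<bullet> pv z q = 0"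
    and orthonormal: "\<forall>q\<in>D. x q \<bullet> x q = 1 \<and> y q \<bullet> y q = 1 \<and> n1 q \<bullet> n1 q = 1 \<and> n2 q \<bullet> n2 q = 1
          \<and> x q \<bullet> y q = 0 \<and> x q \<bullet> n1 q = 0 \<and> x q \<bullet> n2 q = 0 \<and> y q \<bullet> n1 q = 0
          \<and> y q \<bullet> n2 q = 0 \<and> n1 q \<bullet> n2 q = 0"
    and oriented: "\<forall>q\<in>D. pos_oriented (x q) (y q) (n1 q) (n2 q)"
    and p: "p \<in> D"
    and frame: "adapted_normal_frame z p e1 e2"
  shows "varkappa z p e1 e2 = normal_curv z x y n2 p \<bullet> n1 p"
proof -
  have oD: "open D" and sz: "smooth_on D z" and W: "\<And>q. q \<in> D \<Longrightarrow> EE z q * GG z q - (FF z q)^2 > 0"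
    using surf unfolding regular_surface_def by auto
  note dz = smooth_D[OF sz] and dx = smooth_D[OF smooth(1)] and dy = smooth_D[OF smooth(2)]
    and dn1 = smooth_D[OF smooth(3)] and dn2 = smooth_D[OF smooth(4)]
  have tx: "\<And>q. q \<in> D \<Longrightarrow> x q \<in> span {pu z q, pv z q}" and ty: "\<And>q. q \<in> D \<Longrightarrow> y q \<in> span {pu z q, pv z q}"
    using tangent by auto
  have on: "x q \<bullet> x q = 1" "y q \<bullet> y q = 1" "n1 q \<bullet> n1 q = 1" "n2 q \<bullet> n2 q = 1"
          "x q \<bullet> y q = 0" "x q \<bullet> n1 q = 0" "x q \<bullet> n2 q = 0" "y q \<bullet> n1 q = 0"
          "y q \<bullet> n2 q = 0" "n1 q \<bullet> n2 q = 0" if "q \<in> D" for q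
    using orthonormal that by auto
  have nor: "n1 q \<bullet> pu z q = 0" "n1 q \<bullet> pv z q = 0" "n2 q \<bullet> pu z q = 0" "n2 q \<bullet> pv z q = 0" if "q \<in> D" for q
    using normal that by auto
  have npart: "normal_part z q w = (w \<bullet> n1 q) *\<^sub>R n1 q + (w \<bullet> n2 q) *\<^sub>R n2 q" if "q \<in> D" for q w
    by (rule normal_part_eq[of "x q" z q "y q" "n1 q" "n2 q" w]) (use tx ty on nor that in auto)
  have unit0: "pu n q \<bullet> n q = 0 \<and> pv n q \<bullet> n q = 0"
    if q: "q \<in> D" and nn: "\<And>r. r \<in> D \<Longrightarrow> n r \<bullet> n r = 1" and dn: "n differentiable at q" for n q
  proof -
    have "pu (\<lambda>r. n r \<bullet> n r) q = pu (\<lambda>r. 1) q" by (rule pu_cong[OF oD q]) (simp add: nn)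
    moreover have "pv (\<lambda>r. n r \<bullet> n r) q = pv (\<lambda>r. 1) q" by (rule pv_cong[OF oD q]) (simp add: nn)
    ultimately show ?thesis using pu_inner[OF dn dn] pv_inner[OF dn dn]
      by (simp add: inner_commute pu_const pv_const)
  qed
  have orth0: "pu n q \<bullet> w q = - (n q \<bullet> pu w q) \<and> pv n q \<bullet> w q = - (n q \<bullet> pv w q)"
    if q: "q \<in> D" and nn: "\<And>r. r \<in> D \<Longrightarrow> n r \<bullet> w r = 0" and dn: "n differentiable at q"
      and dw: "w differentiable at q" for n w q
  proof -
    have "pu (\<lambda>r. n r \<bullet> w r) q = pu (\<lambda>r. 0) q" by (rule pu_cong[OF oD q]) (simp add: nn)
    moreover have "pv (\<lambda>r. n r \<bullet> w r) q = pv (\<lambda>r. 0) q" by (rule pv_cong[OF oD q]) (simp add: nn)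
    ultimately show ?thesis using pu_inner[OF dn dw] pv_inner[OF dn dw]
      by (simp add: pu_const pv_const)
  qed
  have n1u: "pu n1 q \<bullet> n1 q = 0" "pv n1 q \<bullet> n1 q = 0" if "q \<in> D" for q
    using unit0[OF that, of n1] on dn1(1) that by auto
  have n2u: "pu n2 q \<bullet> n2 q = 0" "pv n2 q \<bullet> n2 q = 0" if "q \<in> D" for q
    using unit0[OF that, of n2] on dn2(1) that by auto
  define A1 where "A1 = (\<lambda>r. fst (tcoords z x r))"
  define A2 where "A2 = (\<lambda>r. snd (tcoords z x r))"
  define B1 where "B1 = (\<lambda>r. fst (tcoords z y r))"
  define B2 where "B2 = (\<lambda>r. snd (tcoords z y r))"
  have Ae: "fst (tcoords z x q) = A1 q" "snd (tcoords z x q) = A2 q" for q by (simp_all add: A1_def A2_def)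
  have Be: "fst (tcoords z y q) = B1 q" "snd (tcoords z y q) = B2 q" for q by (simp_all add: B1_def B2_def)
  have xe: "x q = A1 q *\<^sub>R pu z q + A2 q *\<^sub>R pv z q" if "q \<in> D" for q
    unfolding A1_def A2_def by (rule tcoords_span[where X=x, OF W[OF that] tx[OF that]])
  have ye: "y q = B1 q *\<^sub>R pu z q + B2 q *\<^sub>R pv z q" if "q \<in> D" for q
    unfolding B1_def B2_def by (rule tcoords_span[where X=y, OF W[OF that] ty[OF that]])
  have dA: "A1 differentiable at p" "A2 differentiable at p"
    unfolding A1_def A2_def using tcoords_diff[where X=x, OF oD p W tx dx(1)[OF p] dz(2)[OF p] dz(3)[OF p]] by auto
  have dB: "B1 differentiable at p" "B2 differentiable at p"
    unfolding B1_def B2_def using tcoords_diff[where X=y, OF oD p W ty dy(1)[OF p] dz(2)[OF p] dz(3)[OF p]] by auto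
  define Oy where "Oy = (\<lambda>r. B1 r * (pu n2 r \<bullet> n1 r) + B2 r * (pv n2 r \<bullet> n1 r))"
  define Ox where "Ox = (\<lambda>r. A1 r * (pu n2 r \<bullet> n1 r) + A2 r * (pv n2 r \<bullet> n1 r))"
  have Ny: "normal_conn z y n2 q = Oy q *\<^sub>R n1 q" if "q \<in> D" for q
    unfolding normal_conn_def dirder_def npart[OF that] Oy_def Be
    using n2u[OF that] by (simp add: inner_add_left)
  have Nx: "normal_conn z x n2 q = Ox q *\<^sub>R n1 q" if "q \<in> D" for q
    unfolding normal_conn_def dirder_def npart[OF that] Ox_def Ae
    using n2u[OF that] by (simp add: inner_add_left)
  have dOy: "Oy differentiable at p" unfolding Oy_def using dB dn1(1)[OF p] dn2(2,3)[OF p] by simp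
  have dOx: "Ox differentiable at p" unfolding Ox_def using dA dn1(1)[OF p] dn2(2,3)[OF p] by simp
  have term1: "normal_conn z x (normal_conn z y n2) p \<bullet> n1 p = A1 p * pu Oy p + A2 p * pv Oy p"
  proof -
    have "pu (normal_conn z y n2) p = pu (\<lambda>r. Oy r *\<^sub>R n1 r) p" by (rule pu_cong[OF oD p]) (simp add: Ny)
    also have "\<dots> = Oy p *\<^sub>R pu n1 p + pu Oy p *\<^sub>R n1 p" by (rule pu_scaleR[OF dOy dn1(1)[OF p]])
    finally have u: "pu (normal_conn z y n2) p = Oy p *\<^sub>R pu n1 p + pu Oy p *\<^sub>R n1 p" .
    have "pv (normal_conn z y n2) p = pv (\<lambda>r. Oy r *\<^sub>R n1 r) p" by (rule pv_cong[OF oD p]) (simp add: Ny)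
    also have "\<dots> = Oy p *\<^sub>R pv n1 p + pv Oy p *\<^sub>R n1 p" by (rule pv_scaleR[OF dOy dn1(1)[OF p]])
    finally have v: "pv (normal_conn z y n2) p = Oy p *\<^sub>R pv n1 p + pv Oy p *\<^sub>R n1 p" .
    show ?thesis
      unfolding normal_conn_def[of z x] dirder_def npart[OF p] Ae u v
      using on[OF p] n1u[OF p] by (simp add: inner_add_left inner_add_right inner_commute)
  qed
  have term2: "normal_conn z y (normal_conn z x n2) p \<bullet> n1 p = B1 p * pu Ox p + B2 p * pv Ox p"
  proof -
    have "pu (normal_conn z x n2) p = pu (\<lambda>r. Ox r *\<^sub>R n1 r) p" by (rule pu_cong[OF oD p]) (simp add: Nx)
    also have "\<dots> = Ox p *\<^sub>R pu n1 p + pu Ox p *\<^sub>R n1 p" by (rule pu_scaleR[OF dOx dn1(1)[OF p]])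
    finally have u: "pu (normal_conn z x n2) p = Ox p *\<^sub>R pu n1 p + pu Ox p *\<^sub>R n1 p" .
    have "pv (normal_conn z x n2) p = pv (\<lambda>r. Ox r *\<^sub>R n1 r) p" by (rule pv_cong[OF oD p]) (simp add: Nx)
    also have "\<dots> = Ox p *\<^sub>R pv n1 p + pv Ox p *\<^sub>R n1 p" by (rule pv_scaleR[OF dOx dn1(1)[OF p]])
    finally have v: "pv (normal_conn z x n2) p = Ox p *\<^sub>R pv n1 p + pv Ox p *\<^sub>R n1 p" .
    show ?thesis
      unfolding normal_conn_def[of z y] dirder_def npart[OF p] Be u v
      using on[OF p] n1u[OF p] by (simp add: inner_add_left inner_add_right inner_commute)
  qed
  define l1 where "l1 = (A1 p * pu B1 p + A2 p * pv B1 p) - (B1 p * pu A1 p + B2 p * pv A1 p)"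
  define l2 where "l2 = (A1 p * pu B2 p + A2 p * pv B2 p) - (B1 p * pu A2 p + B2 p * pv A2 p)"
  have tcL: "tcoords z (lie_bracket z x y) p = (l1, l2)"
    by (rule tcoords_eq[where X="lie_bracket z x y", OF W[OF p]])
       (simp add: lie_bracket_def dirder_def l1_def l2_def Ae Be)
  have term3: "normal_conn z (lie_bracket z x y) n2 p \<bullet> n1 p = l1 * (pu n2 p \<bullet> n1 p) + l2 * (pv n2 p \<bullet> n1 p)"
    unfolding normal_conn_def dirder_def npart[OF p] tcL using on[OF p] n2u[OF p]
    by (simp add: inner_add_left inner_add_right inner_commute)
  note dd = dA dB dn1(1)[OF p] dn1(2)[OF p] dn1(3)[OF p] dn2(2)[OF p] dn2(3)[OF p]
  have puOy: "pu Oy p = B1 p * (pu n2 p \<bullet> pu n1 p + pu (pu n2) p \<bullet> n1 p) + pu B1 p * (pu n2 p \<bullet> n1 p)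
      + (B2 p * (pv n2 p \<bullet> pu n1 p + pu (pv n2) p \<bullet> n1 p) + pu B2 p * (pv n2 p \<bullet> n1 p))"
    unfolding Oy_def using dd by (simp add: pu_add pu_mult pu_inner)
  have pvOy: "pv Oy p = B1 p * (pu n2 p \<bullet> pv n1 p + pv (pu n2) p \<bullet> n1 p) + pv B1 p * (pu n2 p \<bullet> n1 p)
      + (B2 p * (pv n2 p \<bullet> pv n1 p + pv (pv n2) p \<bullet> n1 p) + pv B2 p * (pv n2 p \<bullet> n1 p))"
    unfolding Oy_def using dd by (simp add: pv_add pv_mult pv_inner)
  have puOx: "pu Ox p = A1 p * (pu n2 p \<bullet> pu n1 p + pu (pu n2) p \<bullet> n1 p) + pu A1 p * (pu n2 p \<bullet> n1 p)
      + (A2 p * (pv n2 p \<bullet> pu n1 p + pu (pv n2) p \<bullet> n1 p) + pu A2 p * (pv n2 p \<bullet> n1 p))"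
    unfolding Ox_def using dd by (simp add: pu_add pu_mult pu_inner)
  have pvOx: "pv Ox p = A1 p * (pu n2 p \<bullet> pv n1 p + pv (pu n2) p \<bullet> n1 p) + pv A1 p * (pu n2 p \<bullet> n1 p)
      + (A2 p * (pv n2 p \<bullet> pv n1 p + pv (pv n2) p \<bullet> n1 p) + pv A2 p * (pv n2 p \<bullet> n1 p))"
    unfolding Ox_def using dd by (simp add: pv_add pv_mult pv_inner)
  have sym_n2: "pv (pu n2) p = pu (pv n2) p"
    by (rule schwarz_vec[OF oD p dn2(1) dn2(2)[OF p] dn2(3)[OF p]])
  have sym_z: "pv (pu z) p = pu (pv z) p"
    by (rule schwarz_vec[OF oD p dz(1) dz(2)[OF p] dz(3)[OF p]])
  have R1: "normal_curv z x y n2 p \<bullet> n1 p = (A1 p * B2 p - A2 p * B1 p) * (pv n2 p \<bullet> pu n1 p - pu n2 p \<bullet> pv n1 p)"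
    unfolding normal_curv_def inner_diff_left term1 term2 term3 l1_def l2_def puOy pvOy puOx pvOx sym_n2
    by (simp add: algebra_simps)
  define h111 where "h111 = n1 p \<bullet> pu (pu z) p"
  define h112 where "h112 = n1 p \<bullet> pu (pv z) p"
  define h122 where "h122 = n1 p \<bullet> pv (pv z) p"
  define h211 where "h211 = n2 p \<bullet> pu (pu z) p"
  define h212 where "h212 = n2 p \<bullet> pu (pv z) p"
  define h222 where "h222 = n2 p \<bullet> pv (pv z) p"
  have o1u: "pu n1 p \<bullet> pu z p = - h111" "pv n1 p \<bullet> pu z p = - h112"
    using orth0[OF p, of n1 "pu z"] nor dn1(1)[OF p] dz(2)[OF p] unfolding h111_def h112_def sym_z by auto
  have o1v: "pu n1 p \<bullet> pv z p = - h112" "pv n1 p \<bullet> pv z p = - h122"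
    using orth0[OF p, of n1 "pv z"] nor dn1(1)[OF p] dz(3)[OF p] unfolding h112_def h122_def by auto
  have o2u: "pu n2 p \<bullet> pu z p = - h211" "pv n2 p \<bullet> pu z p = - h212"
    using orth0[OF p, of n2 "pu z"] nor dn2(1)[OF p] dz(2)[OF p] unfolding h211_def h212_def sym_z by auto
  have o2v: "pu n2 p \<bullet> pv z p = - h212" "pv n2 p \<bullet> pv z p = - h222"
    using orth0[OF p, of n2 "pv z"] nor dn2(1)[OF p] dz(3)[OF p] unfolding h212_def h222_def by auto
  have px: "pu n1 p \<bullet> x p = - (A1 p * h111 + A2 p * h112)" "pv n1 p \<bullet> x p = - (A1 p * h112 + A2 p * h122)"
       "pu n2 p \<bullet> x p = - (A1 p * h211 + A2 p * h212)" "pv n2 p \<bullet> x p = - (A1 p * h212 + A2 p * h222)"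
    unfolding xe[OF p] using o1u o1v o2u o2v by (simp_all add: inner_add_right)
  have py: "pu n1 p \<bullet> y p = - (B1 p * h111 + B2 p * h112)" "pv n1 p \<bullet> y p = - (B1 p * h112 + B2 p * h122)"
       "pu n2 p \<bullet> y p = - (B1 p * h211 + B2 p * h212)" "pv n2 p \<bullet> y p = - (B1 p * h212 + B2 p * h222)"
    unfolding ye[OF p] using o1u o1v o2u o2v by (simp_all add: inner_add_right)
  note ex4 = inner_expand4[OF on[OF p]]
  have R2: "pv n2 p \<bullet> pu n1 p = (pv n2 p \<bullet> x p) * (pu n1 p \<bullet> x p) + (pv n2 p \<bullet> y p) * (pu n1 p \<bullet> y p)"
    using ex4[of "pv n2 p" "pu n1 p"] n1u[OF p] n2u[OF p] by simp
  have R3: "pu n2 p \<bullet> pv n1 p = (pu n2 p \<bullet> x p) * (pv n1 p \<bullet> x p) + (pu n2 p \<bullet> y p) * (pv n1 p \<bullet> y p)"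
    using ex4[of "pu n2 p" "pv n1 p"] n1u[OF p] n2u[OF p] by simp
  have RHS: "normal_curv z x y n2 p \<bullet> n1 p = (A1 p * B2 p - A2 p * B1 p) *
      (((A1 p)^2 + (B1 p)^2) * (h111*h212 - h112*h211) + (A1 p * A2 p + B1 p * B2 p) * (h111*h222 - h122*h211)
      + ((A2 p)^2 + (B2 p)^2) * (h112*h222 - h122*h212))"
    unfolding R1 R2 R3 px py by (simp add: algebra_simps power2_eq_square)
  have fr: "e1 \<bullet> e1 = 1" "e2 \<bullet> e2 = 1" "e1 \<bullet> e2 = 0" "e1 \<bullet> pu z p = 0" "e1 \<bullet> pv z p = 0"
     "e2 \<bullet> pu z p = 0" "e2 \<bullet> pv z p = 0" "pos_oriented (pu z p) (pv z p) e1 e2"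
    using frame unfolding adapted_normal_frame_def by auto
  have ex_: "e1 \<bullet> x p = 0" "e2 \<bullet> x p = 0" "e1 \<bullet> y p = 0" "e2 \<bullet> y p = 0"
    using orth_span2[OF fr(4,5) tx[OF p]] orth_span2[OF fr(6,7) tx[OF p]]
      orth_span2[OF fr(4,5) ty[OF p]] orth_span2[OF fr(6,7) ty[OF p]] by auto
  define T11 where "T11 = n1 p \<bullet> e1"
  define T12 where "T12 = n1 p \<bullet> e2"
  define T21 where "T21 = n2 p \<bullet> e1"
  define T22 where "T22 = n2 p \<bullet> e2"
  have t1: "T11^2 + T21^2 = 1"
    using ex4[of e1 e1] ex_ fr unfolding T11_def T21_def by (simp add: inner_commute power2_eq_square)
  have t2: "T12^2 + T22^2 = 1"
    using ex4[of e2 e2] ex_ fr unfolding T12_def T22_def by (simp add: inner_commute power2_eq_square)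
  have t3: "T11*T12 + T21*T22 = 0"
    using ex4[of e1 e2] ex_ fr unfolding T11_def T12_def T21_def T22_def by (simp add: inner_commute)
  have onE: "x p \<bullet> x p = 1" "y p \<bullet> y p = 1" "e1 \<bullet> e1 = 1" "e2 \<bullet> e2 = 1" "x p \<bullet> y p = 0"
      "x p \<bullet> e1 = 0" "x p \<bullet> e2 = 0" "y p \<bullet> e1 = 0" "y p \<bullet> e2 = 0" "e1 \<bullet> e2 = 0"
    using on[OF p] fr ex_ by (simp_all add: inner_commute)
  have n1e: "n1 p = T11 *\<^sub>R e1 + T12 *\<^sub>R e2"
    using on_expand4[OF onE, of "n1 p"] on[OF p] unfolding T11_def T12_def by (simp add: inner_commute)
  have n2e: "n2 p = T21 *\<^sub>R e1 + T22 *\<^sub>R e2"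
    using on_expand4[OF onE, of "n2 p"] on[OF p] unfolding T21_def T22_def by (simp add: inner_commute)
  have ori: "(A1 p * B2 p - A2 p * B1 p) * (T11*T22 - T12*T21) > 0"
  proof -
    have "det (vector [x p, y p, n1 p, n2 p] :: real^4^4) > 0"
      using oriented p unfolding pos_oriented_def by auto
    also have "det (vector [x p, y p, n1 p, n2 p] :: real^4^4) =
       (A1 p * B2 p - A2 p * B1 p) * (T11*T22 - T12*T21) * det (vector [pu z p, pv z p, e1, e2] :: real^4^4)"
      unfolding xe[OF p] ye[OF p] n1e n2e by (rule det_frame_change)
    finally show ?thesis using fr(8) unfolding pos_oriented_def by (simp add: zero_less_mult_iff)
  qed
  have o1: "(A1 p)^2 * EE z p + 2 * A1 p * A2 p * FF z p + (A2 p)^2 * GG z p = 1"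
    using on(1)[OF p] unfolding xe[OF p] EE_def FF_def GG_def
    by (simp add: inner_add_left inner_add_right inner_commute power2_eq_square algebra_simps)
  have o2: "(B1 p)^2 * EE z p + 2 * B1 p * B2 p * FF z p + (B2 p)^2 * GG z p = 1"
    using on(2)[OF p] unfolding ye[OF p] EE_def FF_def GG_def
    by (simp add: inner_add_left inner_add_right inner_commute power2_eq_square algebra_simps)
  have o3: "A1 p * B1 p * EE z p + (A1 p * B2 p + A2 p * B1 p) * FF z p + A2 p * B2 p * GG z p = 0"
    using on(5)[OF p] unfolding xe[OF p] ye[OF p] EE_def FF_def GG_def
    by (simp add: inner_add_left inner_add_right inner_commute algebra_simps)
  have s11: "sigma11 z p = h111 *\<^sub>R n1 p + h211 *\<^sub>R n2 p"
    unfolding sigma11_def npart[OF p] h111_def h211_def by (simp add: inner_commute)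
  have s12: "sigma12 z p = h112 *\<^sub>R n1 p + h212 *\<^sub>R n2 p"
    unfolding sigma12_def npart[OF p] h112_def h212_def by (simp add: inner_commute)
  have s22: "sigma22 z p = h122 *\<^sub>R n1 p + h222 *\<^sub>R n2 p"
    unfolding sigma22_def npart[OF p] h122_def h222_def by (simp add: inner_commute)
  have cc: "cc z p e1 e2 1 1 1 = h111*T11 + h211*T21" "cc z p e1 e2 1 1 2 = h111*T12 + h211*T22"
     "cc z p e1 e2 1 2 1 = h112*T11 + h212*T21" "cc z p e1 e2 1 2 2 = h112*T12 + h212*T22"
     "cc z p e1 e2 2 2 1 = h122*T11 + h222*T21" "cc z p e1 e2 2 2 2 = h122*T12 + h222*T22"
    unfolding cc_def s11 s12 s22 T11_def T12_def T21_def T22_def by (simp_all add: inner_add_left)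
  have LHS: "varkappa z p e1 e2 =
     (EE z p * (2*((h112*T11 + h212*T21)*(h122*T12 + h222*T22) - (h122*T11 + h222*T21)*(h112*T12 + h212*T22))/WW z p)
      + GG z p * (2*((h111*T11 + h211*T21)*(h112*T12 + h212*T22) - (h112*T11 + h212*T21)*(h111*T12 + h211*T22))/WW z p)
      - 2 * FF z p * (((h111*T11 + h211*T21)*(h122*T12 + h222*T22) - (h122*T11 + h222*T21)*(h111*T12 + h211*T22))/WW z p))
     / (2 * (EE z p * GG z p - (FF z p)^2))"
    unfolding varkappa_def LL_def MM_def NN_def Delta1_def Delta2_def Delta3_def cc ..
  show ?thesis
    unfolding LHS RHS WW_def
    by (rule final_alg[OF o1 o2 o3 W[OF p] t1 t2 t3 ori])
qed

end
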